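(* Let $p$ be the transition density of a subordinator as described in the context, and let $q\colon\mathbb{R}\to[0,\infty]$ be measurable, regarded as the time-independent function $q(u,z)=q(z)$. Then: (i) there exist $0\le\eta<\infty$ and a function $Q\colon\{(s,t):s<t\}\to[0,\infty)$ with $Q(s,u)+Q(u,t)\le Q(s,t)$ for all $s<u<t$ such that $$\int_s^t\int_{\mathbb{R}}p(s,x,u,z)q(z)p(u,z,t,y)\,dz\,du\le[\eta+Q(s,t)]\,p(s,x,t,y)\quad\text{for all }s<t,\ x,y\in\mathbb{R},$$ if and only if $\|q\|_\infty<\infty$; (ii) if there are $s<t$ and $C<\infty$ such that $\tilde p(s,x,t,y)\le C\,p(s,x,t,y)$ for all $x<y$, then $\|q\|_\infty<\infty$.
   Context: A subordinator is a nondecreasing Lévy process on $\mathbb{R}$. We assume its distribution at each time $t>0$ has a density $p_t$ with respect to Lebesgue measure, and set $p(s,x,t,y)=p_{t-s}(y-x)$ for $s<t$; $p(s,x,t,y)=0$ whenever $t\le s$ or $y\le x$, and $p(s,x,t,y)>0$ otherwise. $\|q\|_\infty$ is the essential supremum of $q$. The Schr\"odinger perturbation of $p$ by $q$ is $\tilde p=\sum_{n\ge0}p_n$, where $p_0=p$ and $p_n(s,x,t,y)=\int_s^t\int_{\mathbb{R}}p(s,x,u,z)q(z)p_{n-1}(u,z,t,y)\,dz\,du$. *)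

theory Defs
  imports "HOL-Probability.Probability"
begin

definition subordinator_density :: "(real \<Rightarrow> real \<Rightarrow> real) \<Rightarrow> bool" where
  "subordinator_density p \<longleftrightarrow>
     (\<forall>t>0. p t \<in> borel_measurable lborel) \<and>
     (\<forall>t>0. \<forall>x. 0 \<le> p t x) \<and>
     (\<forall>t>0. (\<integral>\<^sup>+x. ennreal (p t x) \<partial>lborel) = 1) \<and>
     (\<forall>t>0. \<forall>x\<le>0. p t x = 0) \<and>
     (\<forall>t>0. \<forall>x>0. 0 < p t x) \<and>
     (\<forall>s>0. \<forall>t>0. \<forall>x. ennreal (p (s + t) x)
          = (\<integral>\<^sup>+z. ennreal (p s z * p t (x - z)) \<partial>lborel)) \<and>
     (\<forall>e>0. ((\<lambda>t. \<integral>\<^sup>+x\<in>{e..}. ennreal (p t x) \<partial>lborel) \<longlongrightarrow> 0) (at_right 0))"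

definition trans_dens :: "(real \<Rightarrow> real \<Rightarrow> real) \<Rightarrow> real \<Rightarrow> real \<Rightarrow> real \<Rightarrow> real \<Rightarrow> real" where
  "trans_dens p s x t y = (if s < t then p (t - s) (y - x) else 0)"

fun pert :: "(real \<Rightarrow> real \<Rightarrow> real) \<Rightarrow> (real \<Rightarrow> ennreal) \<Rightarrow> nat
             \<Rightarrow> real \<Rightarrow> real \<Rightarrow> real \<Rightarrow> real \<Rightarrow> ennreal" where
  "pert p q 0 s x t y = ennreal (trans_dens p s x t y)"
| "pert p q (Suc n) s x t y =
     (\<integral>\<^sup>+u\<in>{s..t}. (\<integral>\<^sup>+z. ennreal (trans_dens p s x u z) * q z * pert p q n u z t y \<partial>lborel) \<partial>lborel)"

definition pert_sum :: "(real \<Rightarrow> real \<Rightarrow> real) \<Rightarrow> (real \<Rightarrow> ennreal)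
             \<Rightarrow> real \<Rightarrow> real \<Rightarrow> real \<Rightarrow> real \<Rightarrow> ennreal" where
  "pert_sum p q s x t y = (\<Sum>n. pert p q n s x t y)"

end

theory Submission
  imports Defs
begin


lemma sd_meas: "subordinator_density p \<Longrightarrow> 0 < t \<Longrightarrow> p t \<in> borel_measurable borel"
  unfolding subordinator_density_def by auto
lemma sd_nonneg: "subordinator_density p \<Longrightarrow> 0 < t \<Longrightarrow> 0 \<le> p t x"
  unfolding subordinator_density_def by auto
lemma sd_one: "subordinator_density p \<Longrightarrow> 0 < t \<Longrightarrow> (\<integral>\<^sup>+x. ennreal (p t x) \<partial>lborel) = 1"
  unfolding subordinator_density_def by auto
lemma sd_zero: "subordinator_density p \<Longrightarrow> 0 < t \<Longrightarrow> x \<le> 0 \<Longrightarrow> p t x = 0"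
  unfolding subordinator_density_def by auto
lemma sd_pos: "subordinator_density p \<Longrightarrow> 0 < t \<Longrightarrow> 0 < x \<Longrightarrow> 0 < p t x"
  unfolding subordinator_density_def by auto
lemma sd_ck: "subordinator_density p \<Longrightarrow> 0 < s \<Longrightarrow> 0 < t \<Longrightarrow>
   ennreal (p (s + t) x) = (\<integral>\<^sup>+z. ennreal (p s z * p t (x - z)) \<partial>lborel)"
  unfolding subordinator_density_def by auto

lemma shift_int:
  fixes f :: "real \<Rightarrow> ennreal"
  assumes [measurable]: "f \<in> borel_measurable borel"
  shows "(\<integral>\<^sup>+w. f (w - z) \<partial>lborel) = (\<integral>\<^sup>+w. f w \<partial>lborel)"
  using nn_integral_real_affine[of "\<lambda>w. f (w - z)" 1 z] by simp

lemma refl_int: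
  fixes f :: "real \<Rightarrow> ennreal"
  assumes [measurable]: "f \<in> borel_measurable borel"
  shows "(\<integral>\<^sup>+w. f (z - w) \<partial>lborel) = (\<integral>\<^sup>+w. f w \<partial>lborel)"
  using nn_integral_real_affine[of "\<lambda>w. f (z - w)" "-1" z] by simp

context
  fixes p :: "real \<Rightarrow> real \<Rightarrow> real"
  assumes sd: "subordinator_density p"
begin

lemma ck_shift:
  assumes "0 < a" "0 < b"
  shows "(\<integral>\<^sup>+z. ennreal (p a (z - x)) * ennreal (p b (y - z)) \<partial>lborel) = ennreal (p (a + b) (y - x))"
proof -
  note [measurable] = sd_meas[OF sd assms(1)] sd_meas[OF sd assms(2)]
  have "(\<integral>\<^sup>+z. ennreal (p a (z - x)) * ennreal (p b (y - z)) \<partial>lborel)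
      = (\<integral>\<^sup>+z. ennreal (p a z) * ennreal (p b (y - x - z)) \<partial>lborel)"
    using shift_int[of "\<lambda>z. ennreal (p a z) * ennreal (p b (y - x - z))" x] by simp
  also have "\<dots> = (\<integral>\<^sup>+z. ennreal (p a z * p b (y - x - z)) \<partial>lborel)"
    by (simp add: ennreal_mult sd_nonneg[OF sd] assms)
  also have "\<dots> = ennreal (p (a + b) (y - x))"
    using sd_ck[OF sd assms] by simp
  finally show ?thesis .
qed

lemma anti_cdf:
  assumes "0 < a" "0 < e"
  shows "emeasure (density lborel (\<lambda>w. ennreal (p (a + e) w))) {..c}
       \<le> emeasure (density lborel (\<lambda>w. ennreal (p a w))) {..c}"
proof -
  note [measurable] = sd_meas[OF sd assms(1)] sd_meas[OF sd assms(2)] sd_meas[OF sd add_pos_pos[OF assms]]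
  have "emeasure (density lborel (\<lambda>w. ennreal (p (a + e) w))) {..c}
     = (\<integral>\<^sup>+w. ennreal (p (a + e) w) * indicator {..c} w \<partial>lborel)"
    by (simp add: emeasure_density)
  also have "\<dots> = (\<integral>\<^sup>+w. (\<integral>\<^sup>+z. ennreal (p a z) * (ennreal (p e (w - z)) * indicator {..c} w) \<partial>lborel) \<partial>lborel)"
    apply (rule nn_integral_cong)
    apply (subst sd_ck[OF sd assms])
    apply (subst nn_integral_multc[symmetric], measurable)
    apply (simp add: ennreal_mult sd_nonneg[OF sd] assms mult.assoc)
    done
  also have "\<dots> = (\<integral>\<^sup>+z. (\<integral>\<^sup>+w. ennreal (p a z) * (ennreal (p e (w - z)) * indicator {..c} w) \<partial>lborel) \<partial>lborel)"
    by (rule lborel_pair.Fubini') measurable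
  also have "\<dots> = (\<integral>\<^sup>+z. ennreal (p a z) * (\<integral>\<^sup>+w. ennreal (p e (w - z)) * indicator {..c} w \<partial>lborel) \<partial>lborel)"
    by (rule nn_integral_cong, rule nn_integral_cmult) measurable
  also have "\<dots> \<le> (\<integral>\<^sup>+z. ennreal (p a z) * indicator {..c} z \<partial>lborel)"
  proof (rule nn_integral_mono)
    fix z
    show "ennreal (p a z) * (\<integral>\<^sup>+w. ennreal (p e (w - z)) * indicator {..c} w \<partial>lborel) \<le> ennreal (p a z) * indicator {..c} z"
    proof (cases "z \<le> c")
      case True
      have "(\<integral>\<^sup>+w. ennreal (p e (w - z)) * indicator {..c} w \<partial>lborel) \<le> (\<integral>\<^sup>+w. ennreal (p e (w - z)) \<partial>lborel)"
        by (rule nn_integral_mono) (simp add: indicator_def)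
      also have "\<dots> = 1" using shift_int[of "\<lambda>w. ennreal (p e w)" z] sd_one[OF sd assms(2)] by simp
      finally have "ennreal (p a z) * (\<integral>\<^sup>+w. ennreal (p e (w - z)) * indicator {..c} w \<partial>lborel) \<le> ennreal (p a z) * 1"
        by (rule mult_left_mono) simp
      then show ?thesis using True by simp
    next
      case False
      have h: "(\<lambda>w. ennreal (p e (w - z)) * indicator {..c} w) = (\<lambda>w. 0)"
      proof
        fix w show "ennreal (p e (w - z)) * indicator {..c} w = 0"
          using False sd_zero[OF sd assms(2), of "w - z"] by (cases "w \<le> c") (auto simp: indicator_def)
      qed
      show ?thesis unfolding h by simp
    qed
  qed
  also have "\<dots> = emeasure (density lborel (\<lambda>w. ennreal (p a w))) {..c}"
    by (simp add: emeasure_density)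
  finally show ?thesis .
qed

end



definition Kr :: "(real \<Rightarrow> real \<Rightarrow> real) \<Rightarrow> real \<Rightarrow> real measure" where
  "Kr p \<tau> = density lborel (\<lambda>w. ennreal (p (exp \<tau>) w))"

definition PP :: "(real \<Rightarrow> real \<Rightarrow> real) \<Rightarrow> real \<Rightarrow> real \<Rightarrow> real" where
  "PP p t x = (if 0 < t then p t x else 0)"

context
  fixes p :: "real \<Rightarrow> real \<Rightarrow> real"
  assumes sd: "subordinator_density p"
begin

lemma Kr_space: "space (Kr p a) = UNIV" by (simp add: Kr_def)
lemma Kr_sets: "sets (Kr p a) = sets borel" by (simp add: Kr_def)

lemma Kr_emeasure: "emeasure (Kr p a) A = (\<integral>\<^sup>+w. ennreal (p (exp a) w) * indicator A w \<partial>lborel)"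
  if "A \<in> sets borel"
  using that sd_meas[OF sd, of "exp a"] by (simp add: Kr_def emeasure_density)

lemma Kr_UNIV: "emeasure (Kr p a) UNIV = 1"
  using Kr_emeasure[of UNIV a] sd_one[OF sd, of "exp a"] by simp

lemma Kr_anti: "a \<le> b \<Longrightarrow> emeasure (Kr p b) {..c} \<le> emeasure (Kr p a) {..c}"
proof (cases "a = b")
  case False
  assume "a \<le> b"
  then have "a < b" using False by simp
  then have e: "0 < exp b - exp a" by simp
  have "exp b = exp a + (exp b - exp a)" by simp
  then show ?thesis unfolding Kr_def
    using anti_cdf[OF sd exp_gt_zero[of a] e, of c] by simp
qed simp

lemma Kr_meas: "Kr p \<in> measurable borel (subprob_algebra borel)"
proof (rule measurable_subprob_algebra_generated[where \<Omega>="UNIV::real set" and G="range atMost :: real set set"])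
  show "sets (borel::real measure) = sigma_sets UNIV (range atMost)"
  proof -
    have "sets (lborel::real measure) = sigma_sets (space lborel) (range atMost)" by (simp add: borel_eq_atMost)
    then show ?thesis by simp
  qed
  show "Int_stable (range atMost :: real set set)" by (auto simp: Int_stable_def)
  show "range atMost \<subseteq> Pow (UNIV :: real set)" by simp
  fix a
  show "subprob_space (Kr p a)" by (rule subprob_spaceI) (auto simp: Kr_space Kr_UNIV)
  show "sets (Kr p a) = sets borel" by (rule Kr_sets)
next
  show "(\<lambda>a. emeasure (Kr p a) UNIV) \<in> borel_measurable borel" by (simp add: Kr_UNIV)
next
  fix A :: "real set" assume "A \<in> range atMost"
  then obtain c where A: "A = {..c}" by auto
  define g where "g a = enn2real (emeasure (Kr p a) {..c})" for a
  have fin: "emeasure (Kr p a) {..c} \<le> 1" for a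
    using emeasure_mono[of "{..c}" UNIV "Kr p a"] Kr_UNIV[of a] by (simp add: Kr_sets)
  have eq: "emeasure (Kr p a) {..c} = ennreal (g a)" for a
    using fin[of a] unfolding g_def by (simp add: ennreal_enn2real_if top_unique) (metis ennreal_one_less_top leD)
  have "mono (\<lambda>a. - g a)"
  proof (rule monoI)
    fix a b :: real assume "a \<le> b"
    then have "ennreal (g b) \<le> ennreal (g a)" using Kr_anti[of a b c] by (simp add: eq)
    then show "- g a \<le> - g b" by (simp add: g_def)
  qed
  then have "(\<lambda>a. - g a) \<in> borel_measurable borel" by (rule borel_measurable_mono)
  then have "(\<lambda>a. - (- g a)) \<in> borel_measurable borel" by (rule borel_measurable_uminus)
  then have gm[measurable]: "g \<in> borel_measurable borel" by simp
  have "(\<lambda>a. ennreal (g a)) \<in> borel_measurable borel" by measurable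
  then show "(\<lambda>a. emeasure (Kr p a) A) \<in> borel_measurable borel" by (simp add: A eq)
qed

lemma hr_meas:
  assumes r: "0 < r"
  shows "(\<lambda>(\<tau>, x). ennreal (p (exp \<tau> + r) x)) \<in> borel_measurable (borel \<Otimes>\<^sub>M borel)"
proof -
  note [measurable] = sd_meas[OF sd r]
  have K[measurable]: "(\<lambda>(\<tau>::real, x::real). Kr p \<tau>) \<in> measurable (borel \<Otimes>\<^sub>M borel) (subprob_algebra borel)"
    using measurable_compose[OF measurable_fst Kr_meas] by (simp add: case_prod_beta')
  have "(\<lambda>y. integral\<^sup>N ((\<lambda>(\<tau>, x). Kr p \<tau>) y) ((\<lambda>y w. ennreal (p r (snd y - w))) y)) \<in> borel_measurable (borel \<Otimes>\<^sub>M borel)"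
    by (rule nn_integral_measurable_subprob_algebra2[OF _ K]) measurable
  moreover have "integral\<^sup>N ((\<lambda>(\<tau>, x). Kr p \<tau>) y) ((\<lambda>y w. ennreal (p r (snd y - w))) y) = (\<lambda>(\<tau>, x). ennreal (p (exp \<tau> + r) x)) y" for y
  proof -
    obtain \<tau> x where y: "y = (\<tau>, x)" by fastforce
    have "integral\<^sup>N (Kr p \<tau>) (\<lambda>w. ennreal (p r (x - w))) = (\<integral>\<^sup>+w. ennreal (p (exp \<tau>) w) * ennreal (p r (x - w)) \<partial>lborel)"
      unfolding Kr_def using sd_meas[OF sd, of "exp \<tau>"] by (subst nn_integral_density) auto
    also have "\<dots> = (\<integral>\<^sup>+w. ennreal (p (exp \<tau>) w * p r (x - w)) \<partial>lborel)"
      by (simp add: ennreal_mult sd_nonneg[OF sd] r)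
    also have "\<dots> = ennreal (p (exp \<tau> + r) x)" using sd_ck[OF sd exp_gt_zero r] by simp
    finally show ?thesis by (simp add: y)
  qed
  ultimately show ?thesis by simp
qed

lemma PP_meas: "(\<lambda>(t, x). PP p t x) \<in> borel_measurable (borel \<Otimes>\<^sub>M borel)"
proof (rule borel_measurable_LIMSEQ_real)
  define r where "r n = 1 / real (Suc n)" for n
  have rpos: "0 < r n" for n by (simp add: r_def)
  show "(\<lambda>i. (\<lambda>(t, x). if r i < t then p (exp (ln (t - r i)) + r i) x else 0) y) \<longlonglongrightarrow> (\<lambda>(t, x). PP p t x) y" for y
  proof -
    obtain t x where y: "y = (t, x)" by fastforce
    show ?thesis
    proof (cases "0 < t")
      case True
      have "r \<longlonglongrightarrow> 0" unfolding r_def using LIMSEQ_inverse_real_of_nat by (simp add: inverse_eq_divide)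
      then have "eventually (\<lambda>i. r i < t) sequentially" using True by (simp add: order_tendsto_iff)
      then have "eventually (\<lambda>i. (\<lambda>(t, x). if r i < t then p (exp (ln (t - r i)) + r i) x else 0) y = PP p t x) sequentially"
        by eventually_elim (simp add: y PP_def True)
      then show ?thesis by (simp add: y tendsto_eventually)
    next
      case False
      have "\<not> r i < t" for i using rpos[of i] False by simp
      then have "(\<lambda>i. if r i < t then p (exp (ln (t - r i)) + r i) x else 0) = (\<lambda>i. 0)" by auto
      then show ?thesis using False by (simp add: y PP_def)
    qed
  qed
  fix i
  have h[measurable]: "(\<lambda>(\<tau>, x). p (exp \<tau> + r i) x) \<in> borel_measurable (borel \<Otimes>\<^sub>M borel)"
  proof -
    have "(\<lambda>y. enn2real ((\<lambda>(\<tau>, x). ennreal (p (exp \<tau> + r i) x)) y)) \<in> borel_measurable (borel \<Otimes>\<^sub>M borel)"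
      using hr_meas[OF rpos] by measurable
    moreover have "enn2real ((\<lambda>(\<tau>, x). ennreal (p (exp \<tau> + r i) x)) y) = (\<lambda>(\<tau>, x). p (exp \<tau> + r i) x) y" for y
      using sd_nonneg[OF sd add_pos_pos[OF exp_gt_zero rpos], of "fst y" i "snd y"]
      by (auto simp: case_prod_beta')
    ultimately show ?thesis by simp
  qed
  have "(\<lambda>(t, x). (\<lambda>(\<tau>, x). p (exp \<tau> + r i) x) (ln (t - r i), x)) \<in> borel_measurable (borel \<Otimes>\<^sub>M borel)"
    by measurable
  then show "(\<lambda>(t, x). if r i < t then p (exp (ln (t - r i)) + r i) x else 0) \<in> borel_measurable (borel \<Otimes>\<^sub>M borel)"
    by measurable
qed

end



lemma pert1_eq: "pert p q 1 s x t y = (\<integral>\<^sup>+u. (\<integral>\<^sup>+z. ennreal (trans_dens p s x u z) * q z * ennreal (trans_dens p u z t y) \<partial>lborel) * indicator {s..t} u \<partial>lborel)"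
  by (simp add: One_nat_def)

context
  fixes p :: "real \<Rightarrow> real \<Rightarrow> real"
  assumes sd: "subordinator_density p"
begin

lemma td_meas: "(\<lambda>z. ennreal (trans_dens p s x u z)) \<in> borel_measurable borel"
  using sd_meas[OF sd, of "u - s"] by (cases "s < u") (auto simp: trans_dens_def)
lemma td_meas2: "(\<lambda>z. ennreal (trans_dens p u z t y)) \<in> borel_measurable borel"
  using sd_meas[OF sd, of "t - u"] by (cases "u < t") (auto simp: trans_dens_def)

lemma inner_ck:
  assumes "s \<le> u" "u \<le> t"
  shows "(\<integral>\<^sup>+z. ennreal (trans_dens p s x u z) * ennreal (trans_dens p u z t y) \<partial>lborel) \<le> ennreal (trans_dens p s x t y)"
proof (cases "s < u \<and> u < t")
  case True
  then have "(\<integral>\<^sup>+z. ennreal (trans_dens p s x u z) * ennreal (trans_dens p u z t y) \<partial>lborel)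
      = (\<integral>\<^sup>+z. ennreal (p (u - s) (z - x)) * ennreal (p (t - u) (y - z)) \<partial>lborel)"
    by (simp add: trans_dens_def)
  also have "\<dots> = ennreal (p (u - s + (t - u)) (y - x))"
    using True by (intro ck_shift[OF sd]) auto
  also have "\<dots> = ennreal (trans_dens p s x t y)" using True by (simp add: trans_dens_def)
  finally show ?thesis by simp
next
  case False
  then have "s = u \<or> u = t" using assms by auto
  then have "(\<lambda>z. ennreal (trans_dens p s x u z) * ennreal (trans_dens p u z t y)) = (\<lambda>z. 0)"
    by (auto simp: trans_dens_def)
  then show ?thesis by simp
qed

lemma bounded_q:
  assumes q: "esssup lborel q < \<top>" and st: "s < t"
  shows "pert p q 1 s x t y \<le> ennreal (enn2real (esssup lborel q) * (t - s)) * ennreal (trans_dens p s x t y)"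
proof -
  define M where "M = enn2real (esssup lborel q)"
  have Mq: "ennreal M = esssup lborel q" using q by (simp add: M_def)
  have AE: "AE z in lborel. q z \<le> ennreal M" using esssup_AE[of q lborel] by (simp add: Mq)
  have inner: "(\<integral>\<^sup>+z. ennreal (trans_dens p s x u z) * q z * ennreal (trans_dens p u z t y) \<partial>lborel) * indicator {s..t} u
      \<le> ennreal M * ennreal (trans_dens p s x t y) * indicator {s..t} u" for u
  proof (cases "u \<in> {s..t}")
    case True
    have "(\<integral>\<^sup>+z. ennreal (trans_dens p s x u z) * q z * ennreal (trans_dens p u z t y) \<partial>lborel)
        \<le> (\<integral>\<^sup>+z. ennreal M * (ennreal (trans_dens p s x u z) * ennreal (trans_dens p u z t y)) \<partial>lborel)"
      by (rule nn_integral_mono_AE) (use AE in \<open>eventually_elim, auto simp: mult_right_mono mult_left_mono mult.commute mult.left_commute\<close>)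
    also have "\<dots> = ennreal M * (\<integral>\<^sup>+z. ennreal (trans_dens p s x u z) * ennreal (trans_dens p u z t y) \<partial>lborel)"
      using td_meas[of s x u] td_meas2[of u t y] by (intro nn_integral_cmult) auto
    also have "\<dots> \<le> ennreal M * ennreal (trans_dens p s x t y)"
      using True by (intro mult_left_mono inner_ck) auto
    finally show ?thesis using True by simp
  qed simp
  have "pert p q 1 s x t y \<le> (\<integral>\<^sup>+u. ennreal M * ennreal (trans_dens p s x t y) * indicator {s..t} u \<partial>lborel)"
    unfolding pert1_eq by (rule nn_integral_mono) (rule inner)
  also have "\<dots> = ennreal M * ennreal (trans_dens p s x t y) * ennreal (t - s)"
    using st by (simp add: nn_integral_cmult_indicator)
  also have "\<dots> = ennreal (M * (t - s)) * ennreal (trans_dens p s x t y)"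
    using st by (simp add: ennreal_mult M_def mult_ac)
  finally show ?thesis by (simp add: M_def)
qed

end



lemma td_PP: "trans_dens p s x t y = PP p (t - s) (y - x)"
  by (simp add: trans_dens_def PP_def)

context
  fixes p :: "real \<Rightarrow> real \<Rightarrow> real"
  assumes sd: "subordinator_density p"
begin

lemma PP_meas2[measurable (raw)]:
  assumes "f \<in> borel_measurable M" "g \<in> borel_measurable M"
  shows "(\<lambda>w. PP p (f w) (g w)) \<in> borel_measurable M"
proof -
  have "(\<lambda>w. (\<lambda>(t, x). PP p t x) (f w, g w)) \<in> borel_measurable M"
    by (rule measurable_compose[OF measurable_Pair[OF assms] PP_meas[OF sd]])
  then show ?thesis by simp
qed

lemma test_meas:
  assumes [measurable]: "q \<in> borel_measurable borel"
  shows "(\<lambda>(x, u). \<integral>\<^sup>+z. indicator {a..b} x * indicator {s..t} u * (ennreal (PP p (u - s) (z - x)) * q z * ennreal (PP p (t - u) (x + d - z))) \<partial>lborel)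
     \<in> borel_measurable (lborel \<Otimes>\<^sub>M lborel)"
  by measurable

lemma x_int:
  assumes su: "s < u" "u < t" and z: "a + d \<le> z" "z \<le> b"
  shows "(\<integral>\<^sup>+x. indicator {a..b} x * (ennreal (PP p (u - s) (z - x)) * ennreal (PP p (t - u) (x + d - z))) \<partial>lborel)
     = ennreal (p (t - s) d)"
proof -
  have m1[measurable]: "p (u - s) \<in> borel_measurable borel" using sd_meas[OF sd] su by simp
  have m2[measurable]: "p (t - u) \<in> borel_measurable borel" using sd_meas[OF sd] su by simp
  have "(\<integral>\<^sup>+x. indicator {a..b} x * (ennreal (PP p (u - s) (z - x)) * ennreal (PP p (t - u) (x + d - z))) \<partial>lborel)
     = (\<integral>\<^sup>+x. ennreal (p (u - s) (z - x)) * ennreal (p (t - u) (d - (z - x))) \<partial>lborel)"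
  proof (rule nn_integral_cong)
    fix x
    show "indicator {a..b} x * (ennreal (PP p (u - s) (z - x)) * ennreal (PP p (t - u) (x + d - z)))
       = ennreal (p (u - s) (z - x)) * ennreal (p (t - u) (d - (z - x)))"
    proof (cases "x \<in> {a..b}")
      case True then show ?thesis using su by (simp add: PP_def algebra_simps)
    next
      case False
      then have "x < a \<or> b < x" by auto
      then have "p (u - s) (z - x) = 0 \<or> p (t - u) (d - (z - x)) = 0"
        using z su sd_zero[OF sd, of "u - s" "z - x"] sd_zero[OF sd, of "t - u" "d - (z - x)"] by auto
      then show ?thesis using False by auto
    qed
  qed
  also have "\<dots> = (\<integral>\<^sup>+w. ennreal (p (u - s) w) * ennreal (p (t - u) (d - w)) \<partial>lborel)"
    by (rule refl_int[of "\<lambda>w. ennreal (p (u - s) w) * ennreal (p (t - u) (d - w))" z]) measurable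
  also have "\<dots> = ennreal (p (u - s + (t - u)) (d - 0))"
    using ck_shift[OF sd, of "u - s" "t - u" 0 d] su by simp
  finally show ?thesis by simp
qed

lemma stepA:
  assumes qm[measurable]: "q \<in> borel_measurable borel" and st: "s < t"
    and hyp: "\<forall>x y. x < y \<longrightarrow> pert p q 1 s x t y \<le> ennreal C * ennreal (trans_dens p s x t y)"
    and d: "0 < d" and ab: "a \<le> b"
  shows "ennreal (t - s) * (\<integral>\<^sup>+z. q z * indicator {a+d..b} z \<partial>lborel) \<le> ennreal C * ennreal (b - a)"
proof -
  define P where "P = p (t - s) d"
  have Ppos: "0 < P" using sd_pos[OF sd] st d by (simp add: P_def)
  define F where "F x u z = indicator {a..b} x * indicator {s..t} u * (ennreal (PP p (u - s) (z - x)) * q z * ennreal (PP p (t - u) (x + d - z)))" for x u z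
  have Fm[measurable]: "(\<lambda>(x, u). \<integral>\<^sup>+z. F x u z \<partial>lborel) \<in> borel_measurable (lborel \<Otimes>\<^sub>M lborel)"
    unfolding F_def by measurable
  have Fm2[measurable]: "(\<lambda>(x, z). F x u z) \<in> borel_measurable (lborel \<Otimes>\<^sub>M lborel)" for u
    unfolding F_def by measurable
  have T: "pert p q 1 s x t (x + d) * indicator {a..b} x = (\<integral>\<^sup>+u. \<integral>\<^sup>+z. F x u z \<partial>lborel \<partial>lborel)" for x
  proof -
    have "pert p q 1 s x t (x + d) * indicator {a..b} x
      = (\<integral>\<^sup>+u. (\<integral>\<^sup>+z. ennreal (PP p (u - s) (z - x)) * q z * ennreal (PP p (t - u) (x + d - z)) \<partial>lborel) * indicator {s..t} u \<partial>lborel) * indicator {a..b} x"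
      unfolding pert1_eq td_PP by simp
    also have "\<dots> = (\<integral>\<^sup>+u. (\<integral>\<^sup>+z. ennreal (PP p (u - s) (z - x)) * q z * ennreal (PP p (t - u) (x + d - z)) \<partial>lborel) * indicator {s..t} u * indicator {a..b} x \<partial>lborel)"
      by (rule nn_integral_multc[symmetric]) measurable
    also have "\<dots> = (\<integral>\<^sup>+u. \<integral>\<^sup>+z. F x u z \<partial>lborel \<partial>lborel)"
    proof (rule nn_integral_cong)
      fix u
      show "(\<integral>\<^sup>+z. ennreal (PP p (u - s) (z - x)) * q z * ennreal (PP p (t - u) (x + d - z)) \<partial>lborel) * indicator {s..t} u * indicator {a..b} x = (\<integral>\<^sup>+z. F x u z \<partial>lborel)"
        unfolding F_def mult.assoc[symmetric]
        by (subst nn_integral_multc[symmetric], measurable)+ (simp add: mult_ac)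
    qed
    finally show ?thesis .
  qed
  have "(\<integral>\<^sup>+x. pert p q 1 s x t (x + d) * indicator {a..b} x \<partial>lborel) \<le> (\<integral>\<^sup>+x. ennreal C * ennreal P * indicator {a..b} x \<partial>lborel)"
  proof (rule nn_integral_mono)
    fix x
    have "pert p q 1 s x t (x + d) \<le> ennreal C * ennreal P"
      using hyp[rule_format, of x "x + d"] d st by (simp add: trans_dens_def P_def)
    then show "pert p q 1 s x t (x + d) * indicator {a..b} x \<le> ennreal C * ennreal P * indicator {a..b} x"
      by (simp add: mult_right_mono)
  qed
  also have "\<dots> = ennreal C * ennreal P * ennreal (b - a)"
    using ab by (simp add: nn_integral_cmult_indicator)
  finally have up0: "(\<integral>\<^sup>+x. pert p q 1 s x t (x + d) * indicator {a..b} x \<partial>lborel) \<le> ennreal C * ennreal P * ennreal (b - a)" .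
  have "(\<integral>\<^sup>+x. pert p q 1 s x t (x + d) * indicator {a..b} x \<partial>lborel) = (\<integral>\<^sup>+x. \<integral>\<^sup>+u. \<integral>\<^sup>+z. F x u z \<partial>lborel \<partial>lborel \<partial>lborel)"
    by (rule nn_integral_cong) (rule T)
  with up0 have up: "(\<integral>\<^sup>+x. \<integral>\<^sup>+u. \<integral>\<^sup>+z. F x u z \<partial>lborel \<partial>lborel \<partial>lborel) \<le> ennreal C * ennreal P * ennreal (b - a)"
    by simp
  have "(\<integral>\<^sup>+x. \<integral>\<^sup>+u. \<integral>\<^sup>+z. F x u z \<partial>lborel \<partial>lborel \<partial>lborel) = (\<integral>\<^sup>+u. \<integral>\<^sup>+x. \<integral>\<^sup>+z. F x u z \<partial>lborel \<partial>lborel \<partial>lborel)"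
    using lborel_pair.Fubini'[OF Fm] by simp
  also have "\<dots> = (\<integral>\<^sup>+u. \<integral>\<^sup>+z. \<integral>\<^sup>+x. F x u z \<partial>lborel \<partial>lborel \<partial>lborel)"
    by (rule nn_integral_cong) (use lborel_pair.Fubini'[OF Fm2] in simp)
  also have "\<dots> \<ge> (\<integral>\<^sup>+u. \<integral>\<^sup>+z. indicator {s<..<t} u * (q z * indicator {a+d..b} z) * ennreal P \<partial>lborel \<partial>lborel)"
  proof (intro nn_integral_mono)
    fix u z
    show "indicator {s<..<t} u * (q z * indicator {a+d..b} z) * ennreal P \<le> (\<integral>\<^sup>+x. F x u z \<partial>lborel)"
    proof (cases "u \<in> {s<..<t} \<and> z \<in> {a+d..b}")
      case True
      have "(\<integral>\<^sup>+x. F x u z \<partial>lborel) = (\<integral>\<^sup>+x. q z * (indicator {a..b} x * (ennreal (PP p (u - s) (z - x)) * ennreal (PP p (t - u) (x + d - z)))) \<partial>lborel)"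
        using True unfolding F_def by (intro nn_integral_cong) (simp add: mult_ac)
      also have "\<dots> = q z * (\<integral>\<^sup>+x. indicator {a..b} x * (ennreal (PP p (u - s) (z - x)) * ennreal (PP p (t - u) (x + d - z))) \<partial>lborel)"
        by (rule nn_integral_cmult) measurable
      also have "\<dots> = q z * ennreal P"
        using True x_int[of s u t a d z b] by (simp add: P_def)
      finally show ?thesis using True by simp
    qed auto
  qed
  also have "(\<integral>\<^sup>+u. \<integral>\<^sup>+z. indicator {s<..<t} u * (q z * indicator {a+d..b} z) * ennreal P \<partial>lborel \<partial>lborel)
      = (\<integral>\<^sup>+u. indicator {s<..<t} u * ((\<integral>\<^sup>+z. q z * indicator {a+d..b} z \<partial>lborel) * ennreal P) \<partial>lborel)"
  proof (rule nn_integral_cong)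
    fix u
    show "(\<integral>\<^sup>+z. indicator {s<..<t} u * (q z * indicator {a+d..b} z) * ennreal P \<partial>lborel)
      = indicator {s<..<t} u * ((\<integral>\<^sup>+z. q z * indicator {a+d..b} z \<partial>lborel) * ennreal P)"
      by (subst nn_integral_multc, measurable, subst nn_integral_cmult, measurable) (simp add: mult_ac)
  qed
  also have "\<dots> = ((\<integral>\<^sup>+z. q z * indicator {a+d..b} z \<partial>lborel) * ennreal P) * ennreal (t - s)"
  proof -
    have e: "(\<lambda>u. indicator {s<..<t} u * ((\<integral>\<^sup>+z. q z * indicator {a+d..b} z \<partial>lborel) * ennreal P))
      = (\<lambda>u. ((\<integral>\<^sup>+z. q z * indicator {a+d..b} z \<partial>lborel) * ennreal P) * indicator {s<..<t} u)"
      by (simp add: mult.commute)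
    show ?thesis unfolding e using st by (subst nn_integral_cmult_indicator) auto
  qed
  finally have "((\<integral>\<^sup>+z. q z * indicator {a+d..b} z \<partial>lborel) * ennreal P) * ennreal (t - s) \<le> ennreal C * ennreal P * ennreal (b - a)"
    using up by simp
  then have "ennreal (1 / P) * (((\<integral>\<^sup>+z. q z * indicator {a+d..b} z \<partial>lborel) * ennreal P) * ennreal (t - s)) \<le> ennreal (1 / P) * (ennreal C * ennreal P * ennreal (b - a))"
    by (rule mult_left_mono) simp
  moreover have "ennreal (1 / P) * ennreal P = 1"
    using Ppos by (simp add: ennreal_mult[symmetric])
  ultimately show ?thesis
    by (simp add: mult_ac) (metis (no_types, lifting) mult.assoc mult.commute mult.left_neutral)
qed

end



lemma B1:
  fixes q :: "real \<Rightarrow> ennreal"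
  assumes K: "0 \<le> K"
    and hyp: "\<And>a b d. 0 < d \<Longrightarrow> a \<le> b \<Longrightarrow> (\<integral>\<^sup>+z. q z * indicator {a+d..b} z \<partial>lborel) \<le> ennreal K * ennreal (b - a)"
    and ce: "c \<le> e"
  shows "(\<integral>\<^sup>+z. q z * indicator {c..e} z \<partial>lborel) \<le> ennreal (K * (e - c))"
proof (rule ennreal_le_epsilon)
  fix \<epsilon> :: real assume \<epsilon>: "0 < \<epsilon>"
  define d where "d = \<epsilon> / (K + 1)"
  have d: "0 < d" using \<epsilon> K by (simp add: d_def)
  have Kd: "K * d \<le> \<epsilon>"
  proof -
    have "K * d = \<epsilon> * (K / (K + 1))" using K by (simp add: d_def field_simps)
    also have "\<dots> \<le> \<epsilon> * 1" using K \<epsilon> by (intro mult_left_mono) auto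
    finally show ?thesis by simp
  qed
  have "(\<integral>\<^sup>+z. q z * indicator {c..e} z \<partial>lborel) \<le> ennreal K * ennreal (e - (c - d))"
    using hyp[of d "c - d" e] d ce by simp
  also have "\<dots> = ennreal (K * (e - c) + K * d)"
    using K d ce by (simp add: ennreal_mult[symmetric] algebra_simps)
  also have "\<dots> \<le> ennreal (K * (e - c) + \<epsilon>)" using Kd by (intro ennreal_leI) simp
  also have "\<dots> = ennreal (K * (e - c)) + ennreal \<epsilon>" using K ce \<epsilon> by (intro ennreal_plus) auto
  finally show "(\<integral>\<^sup>+z. q z * indicator {c..e} z \<partial>lborel) \<le> ennreal (K * (e - c)) + ennreal \<epsilon>" .
qed

lemma B3:
  fixes q :: "real \<Rightarrow> ennreal"
  assumes qm[measurable]: "q \<in> borel_measurable borel" and K: "0 \<le> K"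
    and iv: "\<And>c e. c \<le> e \<Longrightarrow> (\<integral>\<^sup>+z. q z * indicator {c..e} z \<partial>lborel) \<le> ennreal (K * (e - c))"
  shows "emeasure lborel {z \<in> {-N..N}. ennreal (K + 1) < q z} = 0"
proof -
  define A where "A = {z \<in> {-N..N}. ennreal (K + 1) < q z}"
  have Am[measurable]: "A \<in> sets borel" unfolding A_def by measurable
  have Afin: "emeasure lborel A < \<top>"
  proof -
    have "emeasure lborel A \<le> emeasure lborel {-N..N}" by (rule emeasure_mono) (auto simp: A_def)
    moreover have "emeasure lborel {-N..N} < \<top>" by (simp add: emeasure_lborel_Icc_eq)
    ultimately show ?thesis by (rule le_less_trans)
  qed
  then obtain m where m: "emeasure lborel A = ennreal m" "0 \<le> m"
    by (cases "emeasure lborel A") auto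
  define \<nu> where "\<nu> S = (\<integral>\<^sup>+z. q z * indicator S z \<partial>lborel)" for S
  have \<nu>D: "\<nu> S = emeasure (density lborel q) S" if "S \<in> sets borel" for S
    using that by (simp add: \<nu>_def emeasure_density)
  have low: "ennreal (K + 1) * ennreal m \<le> \<nu> A"
  proof -
    have "ennreal (K + 1) * ennreal m = (\<integral>\<^sup>+z. ennreal (K + 1) * indicator A z \<partial>lborel)"
      using m by (simp add: nn_integral_cmult_indicator)
    also have "\<dots> \<le> \<nu> A" unfolding \<nu>_def
      by (rule nn_integral_mono) (auto simp: A_def indicator_def less_imp_le)
    finally show ?thesis .
  qed
  have up: "\<nu> A \<le> ennreal K * (ennreal m + ennreal \<epsilon>)" if \<epsilon>: "0 < \<epsilon>" for \<epsilon>
  proof -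
    obtain U where U: "open U" "A \<subseteq> U" "emeasure lborel (U - A) < \<epsilon>"
      using outer_regular_lborel[OF Am \<epsilon>] by blast
    have Um[measurable]: "U \<in> sets borel" using U(1) by auto
    define I where "I = {i :: real \<times> real. 0 < snd i \<and> cball (fst i) (snd i) \<subseteq> U}"
    obtain C where C: "countable C" "C \<subseteq> I"
      "pairwise (\<lambda>i j. disjnt (cball (fst i) (snd i)) (cball (fst j) (snd j))) C"
      "negligible (A - (\<Union>i\<in>C. cball (fst i) (snd i)))"
    proof (rule Vitali_covering_theorem_cballs[of I snd A fst])
      show "\<And>i. i \<in> I \<Longrightarrow> 0 < snd i" by (auto simp: I_def)
      fix x d :: real assume "x \<in> A" "0 < d"
      then obtain r where r: "0 < r" "cball x r \<subseteq> U" using U(1,2) open_contains_cball by blast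
      show "\<exists>i. i \<in> I \<and> x \<in> cball (fst i) (snd i) \<and> snd i < d"
        using r \<open>0 < d\<close> by (intro exI[of _ "(x, min r (d/2))"]) (auto simp: I_def)
    qed blast
    define X where "X i = cball (fst i) (snd i)" for i :: "real \<times> real"
    define V where "V = (\<Union>i\<in>C. X i)"
    have Xm[measurable]: "X i \<in> sets borel" for i unfolding X_def by (simp add: borel_closed)
    have Vm[measurable]: "V \<in> sets borel" unfolding V_def using C(1) by (intro sets.countable_UN'') auto
    have disj: "disjoint_family_on X C"
      using C(3) unfolding disjoint_family_on_def pairwise_def disjnt_def X_def by blast
    have VU: "V \<subseteq> U" using C(2) by (auto simp: V_def X_def I_def)
    have neg: "A - V \<in> null_sets lborel"
    proof -
      have "A - V = A - (\<Union>i\<in>C. cball (fst i) (snd i))" unfolding V_def X_def by (rule refl)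
      then have "negligible (A - V)" using C(4) by (simp only:)
      then have "A - V \<in> null_sets lebesgue" unfolding negligible_iff_null_sets .
      then show ?thesis using null_sets_completion_iff[of "A - V" lborel] by simp
    qed
    have zero: "\<nu> (A - V) = 0"
    proof -
      have "\<nu> (A - V) = (\<integral>\<^sup>+z. 0 \<partial>(lborel::real measure))" unfolding \<nu>_def
        by (rule nn_integral_cong_AE) (use AE_not_in[OF neg] in \<open>eventually_elim, simp\<close>)
      then show ?thesis by simp
    qed
    have "\<nu> A \<le> \<nu> (V \<union> (A - V))" unfolding \<nu>_def
      by (rule nn_integral_mono) (auto simp: indicator_def)
    also have "\<dots> \<le> \<nu> V + \<nu> (A - V)"
    proof -
      have AVm: "A - V \<in> sets borel" by measurable
      have UVm: "V \<union> (A - V) \<in> sets borel" by measurable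
      show ?thesis unfolding \<nu>D[OF AVm] \<nu>D[OF Vm] \<nu>D[OF UVm] by (rule emeasure_subadditive) auto
    qed
    also have "\<dots> = \<nu> V" using zero by simp
    also have "\<dots> = (\<integral>\<^sup>+i. \<nu> (X i) \<partial>count_space C)"
    proof -
      have "\<nu> V = emeasure (density lborel q) (\<Union>(X ` C))" using \<nu>D[OF Vm] by (simp add: V_def)
      also have "\<dots> = (\<integral>\<^sup>+i. emeasure (density lborel q) (X i) \<partial>count_space C)"
        by (rule emeasure_UN_countable) (use C(1) disj in auto)
      also have "\<dots> = (\<integral>\<^sup>+i. \<nu> (X i) \<partial>count_space C)" by (simp add: \<nu>D)
      finally show ?thesis .
    qed
    also have "\<dots> \<le> (\<integral>\<^sup>+i. ennreal K * emeasure lborel (X i) \<partial>count_space C)"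
    proof (rule nn_integral_mono)
      fix i assume "i \<in> space (count_space C)"
      then have si: "0 < snd i" using C(2) by (auto simp: I_def)
      have Xe: "X i = {fst i - snd i..fst i + snd i}" by (simp add: X_def cball_eq_atLeastAtMost)
      have "\<nu> (X i) \<le> ennreal (K * ((fst i + snd i) - (fst i - snd i)))"
        unfolding \<nu>_def Xe by (rule iv) (use si in simp)
      also have "\<dots> = ennreal K * emeasure lborel (X i)"
        unfolding Xe using K si by (simp add: ennreal_mult)
      finally show "\<nu> (X i) \<le> ennreal K * emeasure lborel (X i)" .
    qed
    also have "\<dots> = ennreal K * (\<integral>\<^sup>+i. emeasure lborel (X i) \<partial>count_space C)"
      by (rule nn_integral_cmult) simp
    finally have s1: "\<nu> A \<le> ennreal K * (\<integral>\<^sup>+i. emeasure lborel (X i) \<partial>count_space C)" by simp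
    have "(\<integral>\<^sup>+i. emeasure lborel (X i) \<partial>count_space C) = emeasure lborel V"
      unfolding V_def using C(1) disj by (subst emeasure_UN_countable) auto
    also have "emeasure lborel V \<le> emeasure lborel U" using VU by (intro emeasure_mono) auto
    also have "emeasure lborel U \<le> emeasure lborel A + emeasure lborel (U - A)"
    proof -
      have "emeasure lborel U = emeasure lborel (A \<union> (U - A))" using U(2) by (simp add: Un_absorb1)
      also have "\<dots> \<le> emeasure lborel A + emeasure lborel (U - A)" by (intro emeasure_subadditive) auto
      finally show ?thesis .
    qed
    also have "\<dots> \<le> ennreal m + ennreal \<epsilon>" using U(3) m by (intro add_mono) auto
    finally have s2: "(\<integral>\<^sup>+i. emeasure lborel (X i) \<partial>count_space C) \<le> ennreal m + ennreal \<epsilon>" .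
    show ?thesis using order_trans[OF s1 mult_left_mono[OF s2]] by simp
  qed
  have "m \<le> 0"
  proof (rule field_le_epsilon)
    fix \<epsilon> :: real assume \<epsilon>: "0 < \<epsilon>"
    have "ennreal (K + 1) * ennreal m \<le> ennreal K * (ennreal m + ennreal (\<epsilon> / (K + 1)))"
      using order_trans[OF low up[of "\<epsilon> / (K + 1)"]] \<epsilon> K by simp
    moreover have "ennreal (K + 1) * ennreal m = ennreal ((K + 1) * m)"
      using K m(2) by (intro ennreal_mult[symmetric]) auto
    moreover have "ennreal m + ennreal (\<epsilon> / (K + 1)) = ennreal (m + \<epsilon> / (K + 1))"
      using K m(2) \<epsilon> by (intro ennreal_plus[symmetric]) auto
    moreover have "ennreal K * ennreal (m + \<epsilon> / (K + 1)) = ennreal (K * (m + \<epsilon> / (K + 1)))"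
      using K m(2) \<epsilon> by (intro ennreal_mult[symmetric]) auto
    ultimately have "ennreal ((K + 1) * m) \<le> ennreal (K * (m + \<epsilon> / (K + 1)))"
      by metis
    moreover have "0 \<le> K * (m + \<epsilon> / (K + 1))" using K m(2) \<epsilon> by simp
    ultimately have "(K + 1) * m \<le> K * (m + \<epsilon> / (K + 1))"
      using ennreal_le_iff by blast
    then have "m \<le> K * (\<epsilon> / (K + 1))" by (simp add: algebra_simps)
    also have "\<dots> = \<epsilon> * (K / (K + 1))" by simp
    also have "\<dots> \<le> \<epsilon> * 1" using K \<epsilon> by (intro mult_left_mono) auto
    finally show "m \<le> 0 + \<epsilon>" by simp
  qed
  then have "emeasure lborel A = 0" using m by simp
  then show ?thesis unfolding A_def .
qed

lemma B4:
  fixes q :: "real \<Rightarrow> ennreal"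
  assumes qm[measurable]: "q \<in> borel_measurable borel" and K: "0 \<le> K"
    and iv: "\<And>c e. c \<le> e \<Longrightarrow> (\<integral>\<^sup>+z. q z * indicator {c..e} z \<partial>lborel) \<le> ennreal (K * (e - c))"
  shows "esssup lborel q < \<top>"
proof -
  have N: "{z \<in> {- real N..real N}. ennreal (K + 1) < q z} \<in> null_sets lborel" for N :: nat
    using B3[OF qm K iv, of "real N"] by (intro null_setsI) auto
  have "AE z in lborel. \<forall>N::nat. z \<notin> {z \<in> {- real N..real N}. ennreal (K + 1) < q z}"
  proof (subst AE_all_countable, intro allI)
    fix N :: nat
    show "AE z in lborel. z \<notin> {z \<in> {- real N..real N}. ennreal (K + 1) < q z}"
      by (rule AE_not_in[OF N])
  qed
  then have "AE z in lborel. q z \<le> ennreal (K + 1)"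
  proof eventually_elim
    case (elim z)
    obtain N :: nat where "\<bar>z\<bar> \<le> real N" using real_arch_simple by blast
    then show ?case using elim[rule_format, of N] by (auto simp: not_less)
  qed
  then have "esssup lborel q \<le> ennreal (K + 1)" by (intro esssup_I) auto
  then show ?thesis by (simp add: le_less_trans)
qed




lemma core:
  fixes p :: "real \<Rightarrow> real \<Rightarrow> real" and q :: "real \<Rightarrow> ennreal"
  assumes sd: "subordinator_density p" and qm: "q \<in> borel_measurable lborel" and st: "s < t"
    and hyp: "\<forall>x y. x < y \<longrightarrow> pert p q 1 s x t y \<le> ennreal C * ennreal (trans_dens p s x t y)"
  shows "esssup lborel q < \<top>"
proof -
  have qm'[measurable]: "q \<in> borel_measurable borel" using qm by simp
  define K where "K = max 0 (C / (t - s))"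
  have K: "0 \<le> K" by (simp add: K_def)
  have h: "(\<integral>\<^sup>+z. q z * indicator {a+d..b} z \<partial>lborel) \<le> ennreal K * ennreal (b - a)"
    if d: "0 < d" and ab: "a \<le> b" for a b d
  proof -
    define J where "J = (\<integral>\<^sup>+z. q z * indicator {a+d..b} z \<partial>lborel)"
    have A: "ennreal (t - s) * J \<le> ennreal C * ennreal (b - a)"
      unfolding J_def by (rule stepA[OF sd qm' st hyp d ab])
    have "J = ennreal (1 / (t - s)) * (ennreal (t - s) * J)"
      using st by (simp add: mult.assoc[symmetric] ennreal_mult[symmetric])
    also have "\<dots> \<le> ennreal (1 / (t - s)) * (ennreal C * ennreal (b - a))"
      using A by (rule mult_left_mono) simp
    also have "\<dots> = ennreal (1 / (t - s) * C) * ennreal (b - a)"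
    proof -
      have "ennreal (1 / (t - s)) * ennreal C = ennreal (1 / (t - s) * C)"
        using ennreal_mult'[of "1 / (t - s)" C] st by simp
      then show ?thesis by (simp add: mult.assoc[symmetric])
    qed
    also have "\<dots> \<le> ennreal K * ennreal (b - a)"
      by (intro mult_right_mono ennreal_leI) (auto simp: K_def)
    finally show ?thesis unfolding J_def .
  qed
  show ?thesis
    by (rule B4[OF qm' K]) (rule B1[OF K h])
qed

lemma pert1_le_sum: "pert p q 1 s x t y \<le> pert_sum p q s x t y"
proof -
  have "(\<Sum>n\<in>{1}. pert p q n s x t y) \<le> (\<Sum>n. pert p q n s x t y)"
    by (intro sum_le_suminf) auto
  then show ?thesis by (simp add: pert_sum_def)
qed

theorem corollary3p4:
  fixes p :: "real \<Rightarrow> real \<Rightarrow> real" and q :: "real \<Rightarrow> ennreal"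
  assumes "subordinator_density p"
    and "q \<in> borel_measurable lborel"
  shows "((\<exists>\<eta>::real. 0 \<le> \<eta> \<and> (\<exists>Q :: real \<Rightarrow> real \<Rightarrow> real.
              (\<forall>s t. s < t \<longrightarrow> 0 \<le> Q s t) \<and>
              (\<forall>s u t. s < u \<and> u < t \<longrightarrow> Q s u + Q u t \<le> Q s t) \<and>
              (\<forall>s t x y. s < t \<longrightarrow>
                 pert p q 1 s x t y \<le> ennreal (\<eta> + Q s t) * ennreal (trans_dens p s x t y))))
          \<longleftrightarrow> esssup lborel q < \<top>)
     \<and> ((\<exists>s t (C::real). s < t \<and>
            (\<forall>x y. x < y \<longrightarrow> pert_sum p q s x t y \<le> ennreal C * ennreal (trans_dens p s x t y)))
          \<longrightarrow> esssup lborel q < \<top>)"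
proof (intro conjI iffI impI)
  assume "\<exists>\<eta>::real. 0 \<le> \<eta> \<and> (\<exists>Q :: real \<Rightarrow> real \<Rightarrow> real.
              (\<forall>s t. s < t \<longrightarrow> 0 \<le> Q s t) \<and>
              (\<forall>s u t. s < u \<and> u < t \<longrightarrow> Q s u + Q u t \<le> Q s t) \<and>
              (\<forall>s t x y. s < t \<longrightarrow>
                 pert p q 1 s x t y \<le> ennreal (\<eta> + Q s t) * ennreal (trans_dens p s x t y)))"
  then obtain \<eta> Q where b: "\<forall>s t x y. s < t \<longrightarrow>
                 pert p q 1 s x t y \<le> ennreal (\<eta> + Q s t) * ennreal (trans_dens p s x t y)" by blast
  show "esssup lborel q < \<top>"
  proof (rule core[OF assms, of 0 1 "\<eta> + Q 0 1"], simp, intro allI impI)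
    fix x y :: real assume "x < y"
    show "pert p q 1 0 x 1 y \<le> ennreal (\<eta> + Q 0 1) * ennreal (trans_dens p 0 x 1 y)"
      using b by simp
  qed
next
  assume q: "esssup lborel q < \<top>"
  define M where "M = enn2real (esssup lborel q)"
  have M: "0 \<le> M" by (simp add: M_def)
  show "\<exists>\<eta>::real. 0 \<le> \<eta> \<and> (\<exists>Q :: real \<Rightarrow> real \<Rightarrow> real.
              (\<forall>s t. s < t \<longrightarrow> 0 \<le> Q s t) \<and>
              (\<forall>s u t. s < u \<and> u < t \<longrightarrow> Q s u + Q u t \<le> Q s t) \<and>
              (\<forall>s t x y. s < t \<longrightarrow>
                 pert p q 1 s x t y \<le> ennreal (\<eta> + Q s t) * ennreal (trans_dens p s x t y)))"
  proof (intro exI conjI allI impI)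
    show "0 \<le> (0::real)" by simp
    fix s t :: real assume "s < t"
    then show "0 \<le> M * (t - s)" using M by simp
  next
    fix s u t :: real assume "s < u \<and> u < t"
    show "M * (u - s) + M * (t - u) \<le> M * (t - s)" by (simp add: algebra_simps)
  next
    fix s t x y :: real assume st: "s < t"
    show "pert p q 1 s x t y \<le> ennreal (0 + M * (t - s)) * ennreal (trans_dens p s x t y)"
      using bounded_q[OF assms(1) q st, of x y] by (simp add: M_def)
  qed
next
  assume "\<exists>s t (C::real). s < t \<and>
            (\<forall>x y. x < y \<longrightarrow> pert_sum p q s x t y \<le> ennreal C * ennreal (trans_dens p s x t y))"
  then obtain s t C where st: "s < t" and b: "\<forall>x y. x < y \<longrightarrow> pert_sum p q s x t y \<le> ennreal C * ennreal (trans_dens p s x t y)"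
    by blast
  show "esssup lborel q < \<top>"
  proof (rule core[OF assms st, of C], intro allI impI)
    fix x y :: real assume xy: "x < y"
    show "pert p q 1 s x t y \<le> ennreal C * ennreal (trans_dens p s x t y)"
      using order_trans[OF pert1_le_sum b[rule_format, OF xy]] .
  qed
qed


end
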